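(* Let $V$ be a vector space over a commutative field $K$, and let $m$ be a product on the tensor coalgebra $T(V)$ such that $(T(V),m,\eta,\Delta,\varepsilon)$ is a bialgebra (its unit is then $1\in V^{\otimes0}$). Define $S:T(V)\to T(V)$ by $S(1)=1$ and, for $n\ge1$ and $p_1,\dots,p_n\in V$, $$S(p_1\top\cdots\top p_n)=-\sum_{c\subseteq\{1,\dots,n-1\}}(-1)^{\mathrm{card}(c)}(p_1\top\cdots\top p_n)_c.$$ Then $S$ is an antipode for $(T(V),m,\eta,\Delta,\varepsilon)$.
   Context: $T(V)=\bigoplus_{n\ge0}V^{\otimes n}$, with $v_1\top\cdots\top v_n$ denoting $v_1\otimes\cdots\otimes v_n\in V^{\otimes n}$ and $1$ the generator of $V^{\otimes0}=K$, is the tensor coalgebra with coproduct $\Delta(v_1\top\cdots\top v_n)=\sum_{k=0}^n(v_1\top\cdots\top v_k)\otimes(v_{k+1}\top\cdots\top v_n)$ and counit $\varepsilon(1)=1$, $\varepsilon(V^{\otimes n})=0$ for $n\ge1$. For $c=\{j_1<\cdots<j_r\}\subseteq\{1,\dots,n-1\}$, $(p_1\top\cdots\top p_n)_c$ is obtained by replacing the $j$-th symbol $\top$ (counted from the left) by the product $m$ for each $j\in c$, i.e. $(p_1\top\cdots\top p_n)_c=(p_1\top\cdots\top p_{j_1})\,(p_{j_1+1}\top\cdots\top p_{j_2})\cdots(p_{j_r+1}\top\cdots\top p_n)$, products taken with $m$. *)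

theory Defs
  imports Main "HOL-Library.Function_Algebras"
begin

text \<open>Model: V is the free K-vector space on a basis type 'b (finitely supported
functions 'b => 'k).  Then V^{\<otimes>n} is identified with finitely supported functions
on words of length n, T(V) with finitely supported functions 'b list => 'k, and
T(V) \<otimes> T(V) with finitely supported functions on pairs of words.\<close>

definition fsupp :: "('a \<Rightarrow> 'k::zero) \<Rightarrow> 'a set" where
  "fsupp f = {x. f x \<noteq> 0}"

definition Vsp :: "('b \<Rightarrow> 'k::field) set" where
  "Vsp = {p. finite (fsupp p)}"

definition TV :: "('b list \<Rightarrow> 'k::field) set" where
  "TV = {x. finite (fsupp x)}"

definition smul :: "'k::field \<Rightarrow> ('a \<Rightarrow> 'k) \<Rightarrow> ('a \<Rightarrow> 'k)" where
  "smul r x = (\<lambda>w. r * x w)"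

definition ebas :: "'b list \<Rightarrow> ('b list \<Rightarrow> 'k::field)" where
  "ebas u = (\<lambda>w. if w = u then 1 else 0)"

definition tens :: "('b \<Rightarrow> 'k::field) list \<Rightarrow> ('b list \<Rightarrow> 'k)" where
  "tens ps = (\<lambda>w. if length w = length ps then (\<Prod>i<length ps. (ps ! i) (w ! i)) else 0)"

definition oneT :: "'b list \<Rightarrow> 'k::field" where
  "oneT = tens []"

definition Delta :: "('b list \<Rightarrow> 'k::field) \<Rightarrow> ('b list \<times> 'b list \<Rightarrow> 'k)" where
  "Delta x = (\<lambda>(u, v). x (u @ v))"

definition epsilon :: "('b list \<Rightarrow> 'k::field) \<Rightarrow> 'k" where
  "epsilon x = x []"

text \<open>Product on T(V) \<otimes> T(V) induced by m: (a\<otimes>b)(c\<otimes>d) = m a c \<otimes> m b d, extended bilinearly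
(expressed on the basis e_u \<otimes> e_v).\<close>
definition mm :: "(('b list \<Rightarrow> 'k::field) \<Rightarrow> ('b list \<Rightarrow> 'k) \<Rightarrow> ('b list \<Rightarrow> 'k))
   \<Rightarrow> ('b list \<times> 'b list \<Rightarrow> 'k) \<Rightarrow> ('b list \<times> 'b list \<Rightarrow> 'k) \<Rightarrow> ('b list \<times> 'b list \<Rightarrow> 'k)" where
  "mm m X Y = (\<lambda>(w1, w2). \<Sum>(u1, u2)\<in>fsupp X. \<Sum>(v1, v2)\<in>fsupp Y.
       X (u1, u2) * Y (v1, v2) * m (ebas u1) (ebas v1) w1 * m (ebas u2) (ebas v2) w2)"

definition is_linear_T :: "(('b list \<Rightarrow> 'k::field) \<Rightarrow> ('b list \<Rightarrow> 'k)) \<Rightarrow> bool" where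
  "is_linear_T f \<longleftrightarrow> (\<forall>x\<in>TV. f x \<in> TV) \<and>
     (\<forall>x\<in>TV. \<forall>y\<in>TV. f (x + y) = f x + f y) \<and>
     (\<forall>r. \<forall>x\<in>TV. f (smul r x) = smul r (f x))"

text \<open>(T(V), m, \<eta>, \<Delta>, \<epsilon>) is a bialgebra, where \<eta>(1) = u.  The coalgebra axioms hold
automatically for the tensor coalgebra.\<close>
definition is_bialgebra ::
  "(('b list \<Rightarrow> 'k::field) \<Rightarrow> ('b list \<Rightarrow> 'k) \<Rightarrow> ('b list \<Rightarrow> 'k)) \<Rightarrow> ('b list \<Rightarrow> 'k) \<Rightarrow> bool" where
  "is_bialgebra m u \<longleftrightarrow>
     u \<in> TV \<and>
     (\<forall>x\<in>TV. \<forall>y\<in>TV. m x y \<in> TV) \<and>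
     (\<forall>y\<in>TV. is_linear_T (\<lambda>x. m x y)) \<and>
     (\<forall>x\<in>TV. is_linear_T (\<lambda>y. m x y)) \<and>
     (\<forall>x\<in>TV. \<forall>y\<in>TV. \<forall>z\<in>TV. m (m x y) z = m x (m y z)) \<and>
     (\<forall>x\<in>TV. m u x = x \<and> m x u = x) \<and>
     (\<forall>x\<in>TV. \<forall>y\<in>TV. Delta (m x y) = mm m (Delta x) (Delta y)) \<and>
     Delta u = (\<lambda>(a, b). u a * u b) \<and>
     (\<forall>x\<in>TV. \<forall>y\<in>TV. epsilon (m x y) = epsilon x * epsilon y) \<and>
     epsilon u = 1"

definition conv_S_id where
  "conv_S_id m S x = (\<Sum>(a, b)\<in>fsupp (Delta x). smul (Delta x (a, b)) (m (S (ebas a)) (ebas b)))"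

definition conv_id_S where
  "conv_id_S m S x = (\<Sum>(a, b)\<in>fsupp (Delta x). smul (Delta x (a, b)) (m (ebas a) (S (ebas b))))"

definition is_antipode where
  "is_antipode m u S \<longleftrightarrow> is_linear_T S \<and>
     (\<forall>x\<in>TV. conv_S_id m S x = smul (epsilon x) u \<and> conv_id_S m S x = smul (epsilon x) u)"

text \<open>Splitting a list at sorted cut positions j_1 < ... < j_r (cut after j-th element).\<close>
fun blocks :: "nat list \<Rightarrow> 'a list \<Rightarrow> 'a list list" where
  "blocks [] ps = [ps]"
| "blocks (j # js) ps = take j ps # blocks (map (\<lambda>i. i - j) js) (drop j ps)"

fun mprod :: "('a \<Rightarrow> 'a \<Rightarrow> 'a) \<Rightarrow> 'a \<Rightarrow> 'a list \<Rightarrow> 'a" where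
  "mprod m e [] = e"
| "mprod m e [x] = x"
| "mprod m e (x # y # xs) = m x (mprod m e (y # xs))"

definition cutprod where
  "cutprod m ps c = mprod m oneT (map tens (blocks (sorted_list_of_set c) ps))"

end

theory Submission
  imports Defs
begin


lemma sl_insert_min:
  fixes c :: "nat set"
  assumes "finite c" "\<forall>i\<in>c. k < i"
  shows "sorted_list_of_set (insert k c) = k # sorted_list_of_set c"
proof -
  have "sorted_wrt (<) (k # sorted_list_of_set c) \<and> set (k # sorted_list_of_set c) = insert k c
        \<and> length (k # sorted_list_of_set c) = card (insert k c)"
    using assms by (auto simp: card_insert_if)
  then show ?thesis using assms sorted_list_of_set_unique[of "insert k c"] by blast
qed

lemma sl_insert_max:
  fixes c :: "nat set"
  assumes "finite c" "\<forall>i\<in>c. i < k"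
  shows "sorted_list_of_set (insert k c) = sorted_list_of_set c @ [k]"
proof -
  have "sorted_wrt (<) (sorted_list_of_set c @ [k]) \<and> set (sorted_list_of_set c @ [k]) = insert k c
        \<and> length (sorted_list_of_set c @ [k]) = card (insert k c)"
    using assms by (auto simp: card_insert_if sorted_wrt_append)
  then show ?thesis using assms sorted_list_of_set_unique[of "insert k c"] by blast
qed

lemma sl_shift:
  fixes c :: "nat set"
  assumes "finite c" "\<forall>i\<in>c. k < i"
  shows "sorted_list_of_set ((\<lambda>i. i - k) ` c) = map (\<lambda>i. i - k) (sorted_list_of_set c)"
proof -
  have inj: "inj_on (\<lambda>i. i - k) c" using assms by (auto simp: inj_on_def)
  have s0: "sorted_wrt (<) (sorted_list_of_set c)" by simp
  have "sorted_wrt (\<lambda>x y. x - k < y - k) (sorted_list_of_set c)"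
    by (rule sorted_wrt_mono_rel[OF _ s0]) (use assms in auto)
  then have "sorted_wrt (<) (map (\<lambda>i. i - k) (sorted_list_of_set c))"
    by (simp add: sorted_wrt_map)
  moreover have "set (map (\<lambda>i. i - k) (sorted_list_of_set c)) = (\<lambda>i. i - k) ` c" using assms by simp
  moreover have "length (map (\<lambda>i. i - k) (sorted_list_of_set c)) = card ((\<lambda>i. i - k) ` c)"
    using assms inj by (simp add: card_image)
  ultimately show ?thesis using assms sorted_list_of_set_unique[of "(\<lambda>i. i - k) ` c"] by blast
qed

lemma blocks_map: "blocks js (map f w) = map (map f) (blocks js w)"
  by (induction js "map f w" arbitrary: w rule: blocks.induct) (auto simp: take_map drop_map)

lemma blocks_ne: "blocks js w \<noteq> []"
  by (cases js) auto

lemma blocks_snoc: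
  assumes "\<forall>i\<in>set js. i \<le> k"
  shows "blocks (js @ [k]) w = blocks js (take k w) @ [drop k w]"
  using assms
proof (induction js w arbitrary: k rule: blocks.induct)
  case (1 w) then show ?case by simp
next
  case (2 j js w)
  note Cons = 2
  have "blocks (map (\<lambda>i. i - j) js @ [k - j]) (drop j w)
     = blocks (map (\<lambda>i. i - j) js) (take (k - j) (drop j w)) @ [drop (k - j) (drop j w)]"
    by (rule 2(1)) (use 2(2) in auto)
  moreover have "take (k - j) (drop j w) = drop j (take k w)" using 2(2) by (simp add: drop_take)
  moreover have "drop (k - j) (drop j w) = drop k w" using 2(2) by simp
  moreover have "take j (take k w) = take j w" using 2(2) by (simp add: min_def)
  ultimately show ?case by simp
qed

lemma sum_Pow_insert:
  assumes "finite A" "a \<notin> A"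
  shows "(\<Sum>c\<in>Pow (insert a A). g c) = (\<Sum>c\<in>Pow A. g c) + (\<Sum>c\<in>Pow A. g (insert a c))"
proof -
  have "(\<Sum>c\<in>Pow (insert a A). g c) = (\<Sum>c\<in>Pow A. g c) + (\<Sum>c\<in>insert a ` Pow A. g c)"
    unfolding Pow_insert by (rule sum.union_disjoint) (use assms in auto)
  moreover have "inj_on (insert a) (Pow A)" using assms by (auto simp: inj_on_def)
  ultimately show ?thesis by (simp add: sum.reindex)
qed

lemma pow_min_split:
  "(\<Sum>c\<in>Pow {a..<n::nat}. g c) = g {} + (\<Sum>k\<in>{a..<n}. \<Sum>c\<in>Pow {Suc k..<n}. g (insert k c))"
proof (induction "n - a" arbitrary: a)
  case 0 then show ?case by simp
next
  case (Suc d)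
  then have an: "a < n" by simp
  have e: "{a..<n} = insert a {Suc a..<n}" using an by auto
  have "(\<Sum>c\<in>Pow {a..<n}. g c) = (\<Sum>c\<in>Pow {Suc a..<n}. g c) + (\<Sum>c\<in>Pow {Suc a..<n}. g (insert a c))"
    unfolding e by (rule sum_Pow_insert) auto
  also have "(\<Sum>c\<in>Pow {Suc a..<n}. g c) = g {} + (\<Sum>k\<in>{Suc a..<n}. \<Sum>c\<in>Pow {Suc k..<n}. g (insert k c))"
    using Suc by (intro Suc.hyps) auto
  finally show ?case using an by (simp add: sum.atLeast_Suc_lessThan add_ac)
qed

lemma pow_max_split:
  "(\<Sum>c\<in>Pow {a..<n::nat}. g c) = g {} + (\<Sum>k\<in>{a..<n}. \<Sum>c\<in>Pow {a..<k}. g (insert k c))"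
proof (induction n)
  case 0 then show ?case by simp
next
  case (Suc n)
  show ?case
  proof (cases "a \<le> n")
    case True
    have e: "{a..<Suc n} = insert n {a..<n}" using True by auto
    have "(\<Sum>c\<in>Pow {a..<Suc n}. g c) = (\<Sum>c\<in>Pow {a..<n}. g c) + (\<Sum>c\<in>Pow {a..<n}. g (insert n c))"
      unfolding e by (rule sum_Pow_insert) auto
    then show ?thesis using Suc True by (simp add: add.assoc)
  next
    case False then show ?thesis by simp
  qed
qed




lemma sum_fun_apply: "(\<Sum>i\<in>A. f i) x = (\<Sum>i\<in>A. f i x)"
  by (induction A rule: infinite_finite_induct) auto

lemma TV_zero: "0 \<in> TV"
  by (simp add: TV_def fsupp_def)

lemma TV_add: "x \<in> TV \<Longrightarrow> y \<in> TV \<Longrightarrow> x + y \<in> TV"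
proof -
  assume a: "x \<in> TV" "y \<in> TV"
  have "fsupp (x + y) \<subseteq> fsupp x \<union> fsupp y" by (auto simp: fsupp_def)
  then show ?thesis using a unfolding TV_def by (auto intro: finite_subset)
qed

lemma TV_smul: "x \<in> TV \<Longrightarrow> smul r x \<in> TV"
  unfolding TV_def fsupp_def smul_def
  by (auto elim!: finite_subset[rotated])

lemma TV_uminus: "x \<in> TV \<Longrightarrow> - x \<in> TV"
  unfolding TV_def fsupp_def by auto

lemma TV_diff: "x \<in> TV \<Longrightarrow> y \<in> TV \<Longrightarrow> x - y \<in> TV"
  using TV_add[of x "- y"] TV_uminus[of y] by simp

lemma TV_sum: "(\<And>i. i \<in> A \<Longrightarrow> f i \<in> TV) \<Longrightarrow> (\<Sum>i\<in>A. f i) \<in> TV"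
  by (induction A rule: infinite_finite_induct) (auto intro: TV_add TV_zero)

lemma ebas_TV: "ebas w \<in> TV"
proof -
  have "fsupp (ebas w) \<subseteq> {w}" by (auto simp: fsupp_def ebas_def)
  then show ?thesis by (auto simp: TV_def intro: finite_subset)
qed

lemma smul_sum: "smul r (\<Sum>i\<in>A. f i) = (\<Sum>i\<in>A. smul r (f i))"
  by (rule ext) (simp add: smul_def sum_fun_apply sum_distrib_left)

lemma smul_0 [simp]: "smul 0 x = 0" by (simp add: smul_def fun_eq_iff)
lemma smul_1 [simp]: "smul 1 x = x" by (simp add: smul_def fun_eq_iff)
lemma smul_zero [simp]: "smul r 0 = 0" by (simp add: smul_def fun_eq_iff)
lemma smul_neg1: "smul (-1) x = - x" by (simp add: smul_def fun_eq_iff)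
lemma smul_uminus: "smul r (- x) = - smul r x" by (simp add: smul_def fun_eq_iff)
lemma smul_smul: "smul r (smul s x) = smul (r * s) x" by (simp add: smul_def fun_eq_iff)
lemma smul_minus_left: "smul (- r) x = - smul r x" by (simp add: smul_def fun_eq_iff)

lemma lin_add: "is_linear_T f \<Longrightarrow> x \<in> TV \<Longrightarrow> y \<in> TV \<Longrightarrow> f (x + y) = f x + f y"
  by (simp add: is_linear_T_def)
lemma lin_smul: "is_linear_T f \<Longrightarrow> x \<in> TV \<Longrightarrow> f (smul r x) = smul r (f x)"
  by (simp add: is_linear_T_def)
lemma lin_TV: "is_linear_T f \<Longrightarrow> x \<in> TV \<Longrightarrow> f x \<in> TV"
  by (simp add: is_linear_T_def)
lemma lin_zero: "is_linear_T f \<Longrightarrow> f 0 = 0"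
  using lin_smul[of f 0 0] TV_zero by simp
lemma lin_zero': "is_linear_T f \<Longrightarrow> f (\<lambda>a. 0) = (\<lambda>a. 0)"
  using lin_zero[of f] by (simp add: zero_fun_def)
lemma lin_uminus: "is_linear_T f \<Longrightarrow> x \<in> TV \<Longrightarrow> f (- x) = - f x"
  using lin_smul[of f x "-1"] by (simp add: smul_neg1)
lemma lin_diff: "is_linear_T f \<Longrightarrow> x \<in> TV \<Longrightarrow> y \<in> TV \<Longrightarrow> f (x - y) = f x - f y"
  using lin_add[of f x "- y"] lin_uminus[of f y] TV_uminus[of y] by simp
lemma lin_sum: "is_linear_T f \<Longrightarrow> (\<And>i. i \<in> A \<Longrightarrow> g i \<in> TV) \<Longrightarrow> f (\<Sum>i\<in>A. g i) = (\<Sum>i\<in>A. f (g i))"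
proof (induction A rule: infinite_finite_induct)
  case (infinite A) then show ?case by (simp add: lin_zero')
next
  case empty then show ?case by (simp add: lin_zero')
next
  case (insert a A)
  have "f (\<Sum>i\<in>insert a A. g i) = f (g a + (\<Sum>i\<in>A. g i))" by (rule arg_cong[where f=f], rule sum.insert[OF insert(1,2)])
  also have "\<dots> = f (g a) + f (\<Sum>i\<in>A. g i)"
    using insert by (intro lin_add TV_sum) auto
  also have "\<dots> = f (g a) + (\<Sum>i\<in>A. f (g i))" using insert by simp
  finally show ?case using sum.insert[OF insert(1,2), of "\<lambda>i. f (g i)"] by simp
qed

lemma unit_is_oneT:
  assumes "is_bialgebra m u"
  shows "u = oneT"
proof -
  have uTV: "u \<in> TV" and D: "Delta u = (\<lambda>(a, b). u a * u b)" and e: "epsilon u = 1"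
    using assms by (auto simp: is_bialgebra_def)
  have mult: "u (a @ b) = u a * u b" for a b
    using fun_cong[OF D, of "(a, b)"] by (simp add: Delta_def)
  have fin: "finite (fsupp u)" using uTV by (simp add: TV_def)
  have u0: "u [] = 1" using e by (simp add: epsilon_def)
  have ne: "fsupp u \<noteq> {}" using u0 by (auto simp: fsupp_def intro!: exI[of _ "[]"])
  define L where "L = Max (length ` fsupp u)"
  have "L \<in> length ` fsupp u" unfolding L_def using fin ne by (intro Max_in) auto
  then obtain v where v: "u v \<noteq> 0" "L = length v" by (auto simp: fsupp_def)
  have L0: "L = 0"
  proof (rule ccontr)
    assume "L \<noteq> 0"
    have "u (v @ v) \<noteq> 0" using v mult by simp
    then have "length (v @ v) \<le> L" unfolding L_def using fin by (intro Max_ge) (auto simp: fsupp_def intro!: image_eqI[where x="v@v"])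
    then show False using v \<open>L \<noteq> 0\<close> by simp
  qed
  have z: "u w = 0" if "w \<noteq> []" for w
  proof (rule ccontr)
    assume a: "u w \<noteq> 0"
    then have "length w \<le> L" unfolding L_def using fin by (intro Max_ge) (auto simp: fsupp_def)
    then show False using L0 that by simp
  qed
  show ?thesis
    by (rule ext) (auto simp: oneT_def tens_def u0 z)
qed




definition dlt :: "'b \<Rightarrow> ('b \<Rightarrow> 'k::field)" where
  "dlt b = (\<lambda>b'. if b' = b then 1 else 0)"

lemma dlt_Vsp: "dlt b \<in> Vsp"
proof -
  have "fsupp (dlt b) \<subseteq> {b}" by (auto simp: fsupp_def dlt_def)
  then show ?thesis by (auto simp: Vsp_def intro: finite_subset)
qed

lemma tens_dlt: "tens (map dlt w) = (ebas w :: 'b list \<Rightarrow> 'k::field)"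
proof (rule ext)
  fix v :: "'b list"
  show "tens (map dlt w) v = (ebas w v :: 'k)"
  proof (cases "length v = length w")
    case True
    show ?thesis
    proof (cases "v = w")
      case True then show ?thesis by (simp add: tens_def ebas_def dlt_def)
    next
      case False
      then obtain i where i: "i < length w" "v ! i \<noteq> w ! i" using True by (auto simp: list_eq_iff_nth_eq)
      then have "(\<Prod>i<length w. dlt (w ! i) (v ! i) :: 'k) = 0"
        by (intro prod_zero) (auto simp: dlt_def intro!: bexI[of _ i])
      then show ?thesis using True False by (simp add: tens_def ebas_def)
    qed
  next
    case False then show ?thesis by (auto simp: tens_def ebas_def)
  qed
qed

lemma oneT_ebas: "oneT = ebas []"
  using tens_dlt[of "[]"] by (simp add: oneT_def)

lemma mprod_cons: "xs \<noteq> [] \<Longrightarrow> mprod m e (x # xs) = m x (mprod m e xs)"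
  by (cases xs) auto

lemma sum_atMost_split:
  assumes "0 < (n::nat)"
  shows "(\<Sum>k\<in>{..n}. f k) = f 0 + (\<Sum>k\<in>{1..<n}. f k) + f n"
proof -
  have e: "{..n} = insert 0 (insert n {1..<n})" using assms by auto
  show ?thesis unfolding e using assms by (simp add: add_ac)
qed

definition P :: "(('b list \<Rightarrow> 'k::field) \<Rightarrow> ('b list \<Rightarrow> 'k) \<Rightarrow> ('b list \<Rightarrow> 'k)) \<Rightarrow> 'b list \<Rightarrow> nat set \<Rightarrow> 'b list \<Rightarrow> 'k" where
  "P m w c = mprod m oneT (map ebas (blocks (sorted_list_of_set c) w))"

definition F :: "(('b list \<Rightarrow> 'k::field) \<Rightarrow> ('b list \<Rightarrow> 'k) \<Rightarrow> ('b list \<Rightarrow> 'k)) \<Rightarrow> 'b list \<Rightarrow> 'b list \<Rightarrow> 'k" where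
  "F m w = (\<Sum>c\<in>Pow {1..<length w}. smul ((-1) ^ card c) (P m w c))"

context
  fixes m :: "('b list \<Rightarrow> 'k::field) \<Rightarrow> ('b list \<Rightarrow> 'k) \<Rightarrow> ('b list \<Rightarrow> 'k)"
    and u :: "'b list \<Rightarrow> 'k"
  assumes bialg: "is_bialgebra m u"
begin

lemma u_eq: "u = oneT" using unit_is_oneT[OF bialg] .

lemma mTV: "x \<in> TV \<Longrightarrow> y \<in> TV \<Longrightarrow> m x y \<in> TV"
  using bialg by (simp add: is_bialgebra_def)
lemma linL: "y \<in> TV \<Longrightarrow> is_linear_T (\<lambda>x. m x y)"
  using bialg by (simp add: is_bialgebra_def)
lemma linR: "x \<in> TV \<Longrightarrow> is_linear_T (\<lambda>y. m x y)"
  using bialg by (simp add: is_bialgebra_def)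
lemma assoc: "x \<in> TV \<Longrightarrow> y \<in> TV \<Longrightarrow> z \<in> TV \<Longrightarrow> m (m x y) z = m x (m y z)"
  using bialg by (simp add: is_bialgebra_def)
lemma unitL: "x \<in> TV \<Longrightarrow> m oneT x = x"
  using bialg u_eq by (simp add: is_bialgebra_def)
lemma unitR: "x \<in> TV \<Longrightarrow> m x oneT = x"
  using bialg u_eq by (simp add: is_bialgebra_def)

lemma mprod_TV: "(\<forall>x\<in>set xs. x \<in> TV) \<Longrightarrow> xs \<noteq> [] \<Longrightarrow> mprod m e xs \<in> TV"
  by (induction xs rule: induct_list012) (auto intro: mTV)

lemma mprod_snoc: "(\<forall>x\<in>set xs. x \<in> TV) \<Longrightarrow> xs \<noteq> [] \<Longrightarrow> y \<in> TV \<Longrightarrow>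
   mprod m e (xs @ [y]) = m (mprod m e xs) y"
proof (induction xs rule: induct_list012)
  case 1 then show ?case by simp
next
  case (2 x) then show ?case by simp
next
  case (3 x z xs)
  then have "mprod m e ((x # z # xs) @ [y]) = m x (mprod m e ((z # xs) @ [y]))" by simp
  also have "\<dots> = m x (m (mprod m e (z # xs)) y)" using 3 by simp
  also have "\<dots> = m (m x (mprod m e (z # xs))) y"
    using 3 by (intro assoc[symmetric] mprod_TV) auto
  finally show ?case using 3 by simp
qed

lemma P_TV: "P m w c \<in> TV"
  unfolding P_def by (rule mprod_TV) (auto simp: ebas_TV blocks_ne)

lemma F_TV: "F m w \<in> TV"
  unfolding F_def by (intro TV_sum TV_smul P_TV)

lemma cutprod_dlt: "cutprod m (map dlt w) c = P m w c"
  by (simp add: cutprod_def P_def blocks_map tens_dlt comp_def)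

lemma P_empty: "P m w {} = ebas w"
  by (simp add: P_def)

lemma F_max:
  assumes "w \<noteq> []"
  shows "F m w = ebas w - (\<Sum>k\<in>{1..<length w}. m (F m (take k w)) (ebas (drop k w)))"
proof -
  let ?n = "length w"
  let ?g = "\<lambda>c. smul ((-1) ^ card c) (P m w c)"
  have inner: "(\<Sum>c\<in>Pow {1..<k}. ?g (insert k c)) = - m (F m (take k w)) (ebas (drop k w))"
    if k: "k \<in> {1..<?n}" for k
  proof -
    have "?g (insert k c) = - smul ((-1) ^ card c) (m (P m (take k w) c) (ebas (drop k w)))"
      if c: "c \<in> Pow {1..<k}" for c
    proof -
      have fc: "finite c" using c finite_subset by auto
      have kc: "k \<notin> c" using c by auto
      have sl: "sorted_list_of_set (insert k c) = sorted_list_of_set c @ [k]"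
        using c by (intro sl_insert_max) (auto intro: finite_subset)
      have bl: "blocks (sorted_list_of_set c @ [k]) w = blocks (sorted_list_of_set c) (take k w) @ [drop k w]"
        using c fc by (intro blocks_snoc) auto
      have "P m w (insert k c) = m (P m (take k w) c) (ebas (drop k w))"
        unfolding P_def sl bl by (simp add: mprod_snoc ebas_TV blocks_ne)
      then show ?thesis using fc kc by (simp add: smul_minus_left)
    qed
    then have "(\<Sum>c\<in>Pow {1..<k}. ?g (insert k c)) =
       (\<Sum>c\<in>Pow {1..<k}. - smul ((-1) ^ card c) (m (P m (take k w) c) (ebas (drop k w))))"
      by (rule sum.cong[OF refl])
    also have "\<dots> = - (\<Sum>c\<in>Pow {1..<k}. (\<lambda>x. m x (ebas (drop k w))) (smul ((-1) ^ card c) (P m (take k w) c)))"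
      by (simp add: sum_negf lin_smul[OF linL] ebas_TV P_TV)
    also have "\<dots> = - m (F m (take k w)) (ebas (drop k w))"
      using k by (simp add: F_def lin_sum[OF linL, symmetric] ebas_TV P_TV TV_smul min_def)
    finally show ?thesis .
  qed
  have "F m w = ?g {} + (\<Sum>k\<in>{1..<?n}. \<Sum>c\<in>Pow {1..<k}. ?g (insert k c))"
    unfolding F_def by (rule pow_max_split)
  also have "\<dots> = ebas w + (\<Sum>k\<in>{1..<?n}. - m (F m (take k w)) (ebas (drop k w)))"
    using inner by (simp add: P_empty)
  finally show ?thesis by (simp add: sum_negf)
qed

lemma F_min:
  assumes "w \<noteq> []"
  shows "F m w = ebas w - (\<Sum>k\<in>{1..<length w}. m (ebas (take k w)) (F m (drop k w)))"
proof -
  let ?n = "length w"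
  let ?g = "\<lambda>c. smul ((-1) ^ card c) (P m w c)"
  have inner: "(\<Sum>c\<in>Pow {Suc k..<?n}. ?g (insert k c)) = - m (ebas (take k w)) (F m (drop k w))"
    if k: "k \<in> {1..<?n}" for k
  proof -
    let ?sh = "\<lambda>i::nat. i - k"
    let ?h = "\<lambda>c'. - smul ((-1) ^ card c') (m (ebas (take k w)) (P m (drop k w) c'))"
    have "?g (insert k c) = ?h (?sh ` c)"
      if c: "c \<in> Pow {Suc k..<?n}" for c
    proof -
      have fc: "finite c" using c finite_subset by auto
      have kc: "k \<notin> c" using c by auto
      have ck: "\<forall>i\<in>c. k < i" using c by auto
      have inj: "inj_on ?sh c" unfolding inj_on_def
      proof (intro ballI impI)
        fix x y assume "x \<in> c" "y \<in> c" "x - k = y - k"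
        then show "x = y" using ck by force
      qed
      have sl: "sorted_list_of_set (insert k c) = k # sorted_list_of_set c"
        using c fc by (intro sl_insert_min) auto
      have sl2: "map ?sh (sorted_list_of_set c) = sorted_list_of_set (?sh ` c)"
        using c fc by (intro sl_shift[symmetric]) auto
      have "P m w (insert k c) = m (ebas (take k w)) (P m (drop k w) (?sh ` c))"
        unfolding P_def sl by (simp add: sl2 mprod_cons blocks_ne)
      moreover have "card (?sh ` c) = card c" using inj by (simp add: card_image)
      ultimately show ?thesis using fc kc by (simp add: smul_minus_left)
    qed
    then have "(\<Sum>c\<in>Pow {Suc k..<?n}. ?g (insert k c)) = (\<Sum>c\<in>Pow {Suc k..<?n}. ?h (?sh ` c))"
      by (rule sum.cong[OF refl])
    also have "\<dots> = (\<Sum>c'\<in>image ?sh ` Pow {Suc k..<?n}. ?h c')"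
    proof -
      have "inj_on ?sh {Suc k..<?n}" by (auto simp: inj_on_def)
      then have "inj_on (image ?sh) (Pow {Suc k..<?n})" by (rule inj_on_image_Pow)
      then show ?thesis by (simp add: sum.reindex)
    qed
    also have "image ?sh ` Pow {Suc k..<?n} = Pow {1..<length (drop k w)}"
    proof (rule image_Pow_surj)
      show "?sh ` {Suc k..<?n} = {1..<length (drop k w)}"
      proof
        show "?sh ` {Suc k..<?n} \<subseteq> {1..<length (drop k w)}" by auto
        show "{1..<length (drop k w)} \<subseteq> ?sh ` {Suc k..<?n}"
        proof
          fix i assume "i \<in> {1..<length (drop k w)}"
          then show "i \<in> ?sh ` {Suc k..<?n}" by (intro image_eqI[of _ _ "i + k"]) auto
        qed
      qed
    qed
    also have "(\<Sum>c'\<in>Pow {1..<length (drop k w)}. ?h c') =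
       - (\<Sum>c'\<in>Pow {1..<length (drop k w)}. (\<lambda>y. m (ebas (take k w)) y) (smul ((-1) ^ card c') (P m (drop k w) c')))"
      by (simp add: sum_negf lin_smul[OF linR] ebas_TV P_TV)
    also have "\<dots> = - m (ebas (take k w)) (F m (drop k w))"
      by (simp add: F_def lin_sum[OF linR, symmetric] ebas_TV P_TV TV_smul)
    finally show ?thesis .
  qed
  have "F m w = ?g {} + (\<Sum>k\<in>{1..<?n}. \<Sum>c\<in>Pow {Suc k..<?n}. ?g (insert k c))"
    unfolding F_def by (rule pow_min_split)
  also have "\<dots> = ebas w + (\<Sum>k\<in>{1..<?n}. - m (ebas (take k w)) (F m (drop k w)))"
    using inner by (simp add: P_empty)
  finally show ?thesis by (simp add: sum_negf)
qed

end



lemma conv_sum: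
  fixes x :: "'b list \<Rightarrow> 'k::field"
  assumes x: "x \<in> TV"
  shows "(\<Sum>(a, b)\<in>fsupp (Delta x). smul (Delta x (a, b)) (G a b)) =
         (\<Sum>w\<in>fsupp x. smul (x w) (\<Sum>k\<in>{..length w}. G (take k w) (drop k w)))"
proof -
  let ?f = "\<lambda>(w, k). (take k w, drop k w)"
  let ?A = "SIGMA w:fsupp x. {..length w}"
  have fin: "finite (fsupp x)" using x by (simp add: TV_def)
  have fs: "fsupp (Delta x) = ?f ` ?A"
  proof
    show "fsupp (Delta x) \<subseteq> ?f ` ?A"
    proof
      fix p assume p: "p \<in> fsupp (Delta x)"
      obtain a b where ab: "p = (a, b)" by (cases p)
      have "x (a @ b) \<noteq> 0" using p ab by (simp add: fsupp_def Delta_def)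
      then have "(a @ b, length a) \<in> ?A" by (simp add: fsupp_def)
      moreover have "p = ?f (a @ b, length a)" using ab by simp
      ultimately show "p \<in> ?f ` ?A" by (rule image_eqI[rotated])
    qed
    show "?f ` ?A \<subseteq> fsupp (Delta x)" by (auto simp: fsupp_def Delta_def)
  qed
  have inj: "inj_on ?f ?A"
  proof (rule inj_onI)
    fix p q assume p: "p \<in> ?A" and q: "q \<in> ?A" and e: "?f p = ?f q"
    obtain w k where pw: "p = (w, k)" by (cases p)
    obtain w' k' where qw: "q = (w', k')" by (cases q)
    have t: "take k w = take k' w'" and d: "drop k w = drop k' w'" using e pw qw by auto
    have "w = take k w @ drop k w" by simp
    also have "\<dots> = w'" using t d by simp
    finally have "w = w'" .
    have kk: "k \<le> length w" "k' \<le> length w'" using p q pw qw by auto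
    have "k = length (take k w)" using kk by simp
    also have "\<dots> = k'" using t kk by simp
    finally have "k = k'" .
    then show "p = q" using pw qw \<open>w = w'\<close> by simp
  qed
  have "(\<Sum>(a, b)\<in>fsupp (Delta x). smul (Delta x (a, b)) (G a b)) =
        (\<Sum>p\<in>?A. (\<lambda>(a, b). smul (Delta x (a, b)) (G a b)) (?f p))"
    unfolding fs sum.reindex[OF inj] o_def ..
  also have "\<dots> = (\<Sum>(w, k)\<in>?A. smul (x w) (G (take k w) (drop k w)))"
    by (rule sum.cong) (auto simp: Delta_def)
  also have "\<dots> = (\<Sum>w\<in>fsupp x. \<Sum>k\<in>{..length w}. smul (x w) (G (take k w) (drop k w)))"
    by (rule sum.Sigma[symmetric]) (use fin in auto)
  also have "\<dots> = (\<Sum>w\<in>fsupp x. smul (x w) (\<Sum>k\<in>{..length w}. G (take k w) (drop k w)))"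
    by (simp add: smul_sum)
  finally show ?thesis .
qed

lemma final_sum:
  fixes x :: "'b list \<Rightarrow> 'k::field"
  assumes fin: "finite (fsupp x)"
  shows "(\<Sum>w\<in>fsupp x. smul (x w) (if w = [] then y else 0)) = smul (x []) y"
proof -
  have "(\<Sum>w\<in>fsupp x. smul (x w) (if w = [] then y else 0)) =
        (\<Sum>w\<in>fsupp x. if w = [] then smul (x w) y else 0)"
    by (rule sum.cong) auto
  also have "\<dots> = (if [] \<in> fsupp x then smul (x []) y else 0)"
    using fin by simp
  also have "\<dots> = smul (x []) y" by (auto simp: fsupp_def)
  finally show ?thesis .
qed



context
  fixes m :: "('b list \<Rightarrow> 'k::field) \<Rightarrow> ('b list \<Rightarrow> 'k) \<Rightarrow> ('b list \<Rightarrow> 'k)"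
    and u :: "'b list \<Rightarrow> 'k"
    and S :: "('b list \<Rightarrow> 'k) \<Rightarrow> ('b list \<Rightarrow> 'k)"
  assumes bialg: "is_bialgebra m u"
    and S_lin: "is_linear_T S"
    and S_one: "S oneT = oneT"
    and S_tens: "\<And>ps. ps \<noteq> [] \<Longrightarrow> set ps \<subseteq> Vsp \<Longrightarrow>
        S (tens ps) = - (\<Sum>c\<in>Pow {1..<length ps}. smul ((-1) ^ card c) (cutprod m ps c))"
begin

lemma SE: "w \<noteq> [] \<Longrightarrow> S (ebas w) = - F m w"
proof -
  assume w: "w \<noteq> []"
  have "set (map dlt w) \<subseteq> Vsp" using dlt_Vsp by auto
  then have 1: "S (tens (map dlt w)) = - (\<Sum>c\<in>Pow {1..<length (map dlt w)}. smul ((-1) ^ card c) (cutprod m (map dlt w) c))"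
    using S_tens[of "map dlt w"] w by simp
  have 2: "(\<Sum>c\<in>Pow {1..<length (map dlt w)}. smul ((-1) ^ card c) (cutprod m (map dlt w) c)) = F m w"
    unfolding F_def by (simp add: cutprod_dlt[OF bialg])
  show ?thesis using 1 2 by (simp add: tens_dlt)
qed

lemma SE0: "S (ebas []) = ebas []"
  using S_one by (simp add: oneT_ebas)

lemma STV: "S x \<in> TV" if "x \<in> TV" using S_lin that by (rule lin_TV)

lemma convL: "(\<Sum>k\<in>{..length w}. m (S (ebas (take k w))) (ebas (drop k w))) = (if w = [] then oneT else 0)"
proof (cases "w = []")
  case True then show ?thesis
    using unitL[OF bialg, of oneT] S_one by (simp add: oneT_ebas ebas_TV)
next
  case False
  let ?n = "length w"
  have mid: "(\<Sum>k\<in>{1..<?n}. m (S (ebas (take k w))) (ebas (drop k w))) =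
        - (\<Sum>k\<in>{1..<?n}. m (F m (take k w)) (ebas (drop k w)))"
  proof -
    have "(\<Sum>k\<in>{1..<?n}. m (S (ebas (take k w))) (ebas (drop k w))) =
        (\<Sum>k\<in>{1..<?n}. - m (F m (take k w)) (ebas (drop k w)))"
    proof (rule sum.cong[OF refl])
      fix k assume "k \<in> {1..<?n}"
      then have "take k w \<noteq> []" by auto
      then show "m (S (ebas (take k w))) (ebas (drop k w)) = - m (F m (take k w)) (ebas (drop k w))"
        by (simp add: SE lin_uminus[OF linL[OF bialg]] ebas_TV F_TV[OF bialg])
    qed
    then show ?thesis by (simp add: sum_negf)
  qed
  have "(\<Sum>k\<in>{..?n}. m (S (ebas (take k w))) (ebas (drop k w))) =
     m (S (ebas [])) (ebas w) + (\<Sum>k\<in>{1..<?n}. m (S (ebas (take k w))) (ebas (drop k w))) + m (S (ebas w)) (ebas [])"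
    using False by (simp add: sum_atMost_split)
  also have "\<dots> = ebas w - (\<Sum>k\<in>{1..<?n}. m (F m (take k w)) (ebas (drop k w))) - F m w"
    unfolding mid SE0 SE[OF False] oneT_ebas[symmetric]
    by (simp add: S_one unitL[OF bialg] unitR[OF bialg] ebas_TV TV_uminus F_TV[OF bialg])
  also have "\<dots> = 0" using F_max[OF bialg False] by simp
  finally show ?thesis using False by simp
qed

lemma convR: "(\<Sum>k\<in>{..length w}. m (ebas (take k w)) (S (ebas (drop k w)))) = (if w = [] then oneT else 0)"
proof (cases "w = []")
  case True then show ?thesis
    using unitL[OF bialg, of oneT] S_one by (simp add: oneT_ebas ebas_TV)
next
  case False
  let ?n = "length w"
  have mid: "(\<Sum>k\<in>{1..<?n}. m (ebas (take k w)) (S (ebas (drop k w)))) =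
        - (\<Sum>k\<in>{1..<?n}. m (ebas (take k w)) (F m (drop k w)))"
  proof -
    have "(\<Sum>k\<in>{1..<?n}. m (ebas (take k w)) (S (ebas (drop k w)))) =
        (\<Sum>k\<in>{1..<?n}. - m (ebas (take k w)) (F m (drop k w)))"
    proof (rule sum.cong[OF refl])
      fix k assume "k \<in> {1..<?n}"
      then have "drop k w \<noteq> []" by auto
      then show "m (ebas (take k w)) (S (ebas (drop k w))) = - m (ebas (take k w)) (F m (drop k w))"
        by (simp add: SE lin_uminus[OF linR[OF bialg]] ebas_TV F_TV[OF bialg])
    qed
    then show ?thesis by (simp add: sum_negf)
  qed
  have "(\<Sum>k\<in>{..?n}. m (ebas (take k w)) (S (ebas (drop k w)))) =
     m (ebas []) (S (ebas w)) + (\<Sum>k\<in>{1..<?n}. m (ebas (take k w)) (S (ebas (drop k w)))) + m (ebas w) (S (ebas []))"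
    using False by (simp add: sum_atMost_split)
  also have "\<dots> = - F m w - (\<Sum>k\<in>{1..<?n}. m (ebas (take k w)) (F m (drop k w))) + ebas w"
    unfolding mid SE0 SE[OF False] oneT_ebas[symmetric]
    by (simp add: S_one unitL[OF bialg] unitR[OF bialg] ebas_TV TV_uminus F_TV[OF bialg])
  also have "\<dots> = 0" using F_min[OF bialg False] by simp
  finally show ?thesis using False by simp
qed

lemma antipode: "is_antipode m u S"
  unfolding is_antipode_def
proof (intro conjI ballI S_lin)
  fix x :: "'b list \<Rightarrow> 'k" assume x: "x \<in> TV"
  have fin: "finite (fsupp x)" using x by (simp add: TV_def)
  show "conv_S_id m S x = smul (epsilon x) u"
    unfolding conv_S_id_def conv_sum[OF x, of "\<lambda>a b. m (S (ebas a)) (ebas b)"] convL final_sum[OF fin]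
    by (simp add: epsilon_def u_eq[OF bialg])
  show "conv_id_S m S x = smul (epsilon x) u"
    unfolding conv_id_S_def conv_sum[OF x, of "\<lambda>a b. m (ebas a) (S (ebas b))"] convR final_sum[OF fin]
    by (simp add: epsilon_def u_eq[OF bialg])
qed

end


theorem mainTheorem16:
  fixes m :: "('b list \<Rightarrow> 'k::field) \<Rightarrow> ('b list \<Rightarrow> 'k) \<Rightarrow> ('b list \<Rightarrow> 'k)"
    and u :: "'b list \<Rightarrow> 'k"
    and S :: "('b list \<Rightarrow> 'k) \<Rightarrow> ('b list \<Rightarrow> 'k)"
  assumes bialg: "is_bialgebra m u"
    and S_lin: "is_linear_T S"
    and S_one: "S oneT = oneT"
    and S_tens: "\<And>ps. ps \<noteq> [] \<Longrightarrow> set ps \<subseteq> Vsp \<Longrightarrow>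
        S (tens ps) = - (\<Sum>c\<in>Pow {1..<length ps}. smul ((-1) ^ card c) (cutprod m ps c))"
  shows "is_antipode m u S"
  by (rule antipode[OF bialg S_lin S_one S_tens])

end
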